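(* Let $\langle S,L,\tau,\ell\rangle$ be a labelled Markov chain and let $R$ be a bisimulation with $\simeq\,\subseteq R\subseteq\,\sim$. Then $\mathrm{Refine}(R)$ is a bisimulation with $\simeq\,\subseteq\mathrm{Refine}(R)\subseteq\,\sim$.
   Context: Labelled Markov chain $\langle S,L,\tau,\ell\rangle$: finite $S$, finite $L$, $\tau:S\to\mathcal{D}(S)$, $\ell:S\to L$, $|\ell(S)|\ge2$. $\Omega(\mu,\nu)$ = couplings (distributions on $S\times S$ with marginals $\mu,\nu$). A bisimulation is an equivalence relation $R\subseteq S\times S$ such that for all $(s,t)\in R$, $\ell(s)=\ell(t)$ and some $\omega\in\Omega(\tau(s),\tau(t))$ has $\mathrm{support}(\omega)\subseteq R$; $\sim$ is bisimilarity. $S^2_\Delta=\{(s,s)\}$, $S^2_1=\{(s,t)\mid\ell(s)\ne\ell(t)\}$. A policy is $P:S\times S\to\mathcal{D}(S\times S)$ with $P(s,t)\in\Omega(\tau(s),\tau(t))$ for $(s,t)\notin S^2_1$ and $P(s,t)$ the point mass at $(s,t)$ for $(s,t)\in S^2_1$; $\mathcal{P}$ = set of policies, inducing Markov chains $\langle S\times S,P\rangle$. Robust bisimilarity: $s\simeq t$ iff some $P\in\mathcal{P}$ makes $(s,t)$ reach $S^2_\Delta$ with probability $1$. $R$ supports a path $(u_1,v_1)\dots(u_n,v_n)$ if $(u_i,v_i)\in R$ and $\mathrm{support}(P(u_i,v_i))\subseteq R$ for all $i$. $\mathrm{Filter}(R)=\{(s,t)\in R\mid\exists P\in\mathcal{P}$: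 $R$ supports a path from $(s,t)$ to $S^2_\Delta\}$; $\mathrm{Prune}(R)=\{(s,t)\in R\mid\forall u:((t,u)\in R\Rightarrow(s,u)\in R)\wedge((u,s)\in R\Rightarrow(u,t)\in R)\}$; $\mathrm{Bisim}(R)$ = largest bisimulation contained in $R$; $\mathrm{Refine}(R)=\mathrm{Bisim}(\mathrm{Prune}(\mathrm{Filter}(R)))$. *)

theory Defs
  imports "HOL-Probability.Probability"
begin

text \<open>Labelled Markov chain: states form the finite type 's (S = UNIV),
  labels the finite type 'l, transition function tau, labelling lab.\<close>

definition couplings :: "'s pmf \<Rightarrow> 's pmf \<Rightarrow> ('s \<times> 's) pmf set" where
  "couplings \<mu> \<nu> = {\<omega>. map_pmf fst \<omega> = \<mu> \<and> map_pmf snd \<omega> = \<nu>}"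

definition bisimulation :: "('s \<Rightarrow> 's pmf) \<Rightarrow> ('s \<Rightarrow> 'l) \<Rightarrow> ('s \<times> 's) set \<Rightarrow> bool" where
  "bisimulation \<tau> lab R \<longleftrightarrow> equiv UNIV R \<and>
     (\<forall>(s,t)\<in>R. lab s = lab t \<and> (\<exists>\<omega>\<in>couplings (\<tau> s) (\<tau> t). set_pmf \<omega> \<subseteq> R))"

definition bisimilarity :: "('s \<Rightarrow> 's pmf) \<Rightarrow> ('s \<Rightarrow> 'l) \<Rightarrow> ('s \<times> 's) set" where
  "bisimilarity \<tau> lab = \<Union>{R. bisimulation \<tau> lab R}"

definition diag_pairs :: "('s \<times> 's) set" where
  "diag_pairs = {(s,s) | s. True}"

definition diff_label_pairs :: "('s \<Rightarrow> 'l) \<Rightarrow> ('s \<times> 's) set" where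
  "diff_label_pairs lab = {(s,t). lab s \<noteq> lab t}"

definition policies :: "('s \<Rightarrow> 's pmf) \<Rightarrow> ('s \<Rightarrow> 'l) \<Rightarrow> ('s \<times> 's \<Rightarrow> ('s \<times> 's) pmf) set" where
  "policies \<tau> lab = {P. \<forall>u. (u \<notin> diff_label_pairs lab \<longrightarrow> P u \<in> couplings (\<tau> (fst u)) (\<tau> (snd u)))
                          \<and> (u \<in> diff_label_pairs lab \<longrightarrow> P u = return_pmf u)}"

text \<open>Probability, in the Markov chain on S x S induced by P, of reaching the
  diagonal from u within n steps.\<close>
primrec reach_within :: "('s \<times> 's \<Rightarrow> ('s \<times> 's) pmf) \<Rightarrow> nat \<Rightarrow> 's \<times> 's \<Rightarrow> real" where
  "reach_within P 0 u = (if u \<in> diag_pairs then 1 else 0)"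
| "reach_within P (Suc n) u =
     (if u \<in> diag_pairs then 1 else measure_pmf.expectation (P u) (reach_within P n))"

definition reach_prob :: "('s \<times> 's \<Rightarrow> ('s \<times> 's) pmf) \<Rightarrow> 's \<times> 's \<Rightarrow> real" where
  "reach_prob P u = (SUP n. reach_within P n u)"

definition robust_bisim :: "('s \<Rightarrow> 's pmf) \<Rightarrow> ('s \<Rightarrow> 'l) \<Rightarrow> ('s \<times> 's) set" where
  "robust_bisim \<tau> lab = {(s,t). \<exists>P\<in>policies \<tau> lab. reach_prob P (s,t) = 1}"

definition supports_path_to_diag ::
    "('s \<times> 's) set \<Rightarrow> ('s \<times> 's \<Rightarrow> ('s \<times> 's) pmf) \<Rightarrow> 's \<times> 's \<Rightarrow> bool" where
  "supports_path_to_diag R P u \<longleftrightarrow> (\<exists>xs. xs \<noteq> [] \<and> hd xs = u \<and> last xs \<in> diag_pairs \<and>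
      (\<forall>i. Suc i < length xs \<longrightarrow> xs ! Suc i \<in> set_pmf (P (xs ! i))) \<and>
      (\<forall>x\<in>set xs. x \<in> R \<and> set_pmf (P x) \<subseteq> R))"

definition Filter :: "('s \<Rightarrow> 's pmf) \<Rightarrow> ('s \<Rightarrow> 'l) \<Rightarrow> ('s \<times> 's) set \<Rightarrow> ('s \<times> 's) set" where
  "Filter \<tau> lab R = {(s,t)\<in>R. \<exists>P\<in>policies \<tau> lab. supports_path_to_diag R P (s,t)}"

definition Prune :: "('s \<times> 's) set \<Rightarrow> ('s \<times> 's) set" where
  "Prune R = {(s,t)\<in>R. \<forall>u. ((t,u)\<in>R \<longrightarrow> (s,u)\<in>R) \<and> ((u,s)\<in>R \<longrightarrow> (u,t)\<in>R)}"

definition Bisim :: "('s \<Rightarrow> 's pmf) \<Rightarrow> ('s \<Rightarrow> 'l) \<Rightarrow> ('s \<times> 's) set \<Rightarrow> ('s \<times> 's) set" where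
  "Bisim \<tau> lab R = \<Union>{B. bisimulation \<tau> lab B \<and> B \<subseteq> R}"

definition Refine :: "('s \<Rightarrow> 's pmf) \<Rightarrow> ('s \<Rightarrow> 'l) \<Rightarrow> ('s \<times> 's) set \<Rightarrow> ('s \<times> 's) set" where
  "Refine \<tau> lab R = Bisim \<tau> lab (Prune (Filter \<tau> lab R))"

end

theory Submission imports Defs begin

lemma glue:
  assumes h1: "\<omega>1 \<in> couplings \<mu> \<nu>" and h2: "\<omega>2 \<in> couplings \<nu> \<rho>"
  shows "\<exists>\<theta>\<in>couplings \<mu> \<rho>. set_pmf \<theta> \<subseteq> set_pmf \<omega>1 O set_pmf \<omega>2 \<and>
     (\<forall>a b c. (a,b)\<in>set_pmf \<omega>1 \<longrightarrow> (b,c)\<in>set_pmf \<omega>2 \<longrightarrow> (a,c)\<in>set_pmf \<theta>)"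
proof -
  have p: "\<mu> = map_pmf fst \<omega>1" and q: "\<nu> = map_pmf snd \<omega>1"
    and q': "\<nu> = map_pmf fst \<omega>2" and r: "\<rho> = map_pmf snd \<omega>2"
    using h1 h2 by (auto simp: couplings_def)
  define \<theta> where "\<theta> = bind_pmf \<omega>1 (\<lambda>xy. bind_pmf (cond_pmf \<omega>2 {yz. fst yz = snd xy})
          (\<lambda>yz. return_pmf (fst xy, snd yz)))"
  have wd: "\<And>y. y \<in> set_pmf \<nu> \<Longrightarrow> set_pmf \<omega>2 \<inter> {yz. fst yz = y} \<noteq> {}"
    by (force simp: q')
  have wd1: "\<And>xy. xy \<in> set_pmf \<omega>1 \<Longrightarrow> set_pmf \<omega>2 \<inter> {yz. fst yz = snd xy} \<noteq> {}"
    using wd by (force simp: q)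
  have st: "set_pmf \<theta> = {(fst xy, snd yz) | xy yz. xy \<in> set_pmf \<omega>1 \<and> yz \<in> set_pmf \<omega>2 \<and> fst yz = snd xy}"
    using wd1 by (auto simp: \<theta>_def) force
  have m1: "map_pmf fst \<theta> = \<mu>"
    by (simp add: \<theta>_def map_bind_pmf split_beta map_pmf_def[symmetric] p map_pmf_comp)
  have "map_pmf snd \<theta> = map_pmf snd (bind_pmf \<nu> (\<lambda>y. cond_pmf \<omega>2 {yz. fst yz = y}))"
    by (simp add: \<theta>_def q split_beta bind_map_pmf map_pmf_def[symmetric] map_bind_pmf map_pmf_comp)
  then have m2: "map_pmf snd \<theta> = \<rho>"
    unfolding r q' bind_map_pmf by (subst (asm) bind_cond_pmf_cancel) (auto simp: eq_commute)
  show ?thesis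
    apply (rule bexI[of _ \<theta>])
    using m1 m2 st by (auto simp: couplings_def relcomp_unfold)
qed

fun reach :: "('s \<Rightarrow> 's pmf) \<Rightarrow> ('s \<times> 's) set \<Rightarrow> nat \<Rightarrow> 's \<times> 's \<Rightarrow> bool" where
  "reach \<tau> R 0 x = (x \<in> diag_pairs)"
| "reach \<tau> R (Suc n) x = (x \<in> diag_pairs \<or> (x \<in> R \<and>
     (\<exists>\<omega>\<in>couplings (\<tau> (fst x)) (\<tau> (snd x)). set_pmf \<omega> \<subseteq> R \<and> (\<exists>y\<in>set_pmf \<omega>. reach \<tau> R n y))))"

declare reach.simps(2)[simp del]

lemma reach_SucI: "x \<in> R \<Longrightarrow> \<omega> \<in> couplings (\<tau> (fst x)) (\<tau> (snd x)) \<Longrightarrow> set_pmf \<omega> \<subseteq> R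
   \<Longrightarrow> y \<in> set_pmf \<omega> \<Longrightarrow> reach \<tau> R n y \<Longrightarrow> reach \<tau> R (Suc n) x"
  by (subst reach.simps(2)) blast

lemma reach_diagI: "x \<in> diag_pairs \<Longrightarrow> reach \<tau> R n x"
  by (cases n) (auto simp: reach.simps(2))

lemma reach_SucE: "reach \<tau> R (Suc n) x \<Longrightarrow> x \<notin> diag_pairs \<Longrightarrow>
  (\<And>\<omega> y. x \<in> R \<Longrightarrow> \<omega> \<in> couplings (\<tau> (fst x)) (\<tau> (snd x)) \<Longrightarrow> set_pmf \<omega> \<subseteq> R
   \<Longrightarrow> y \<in> set_pmf \<omega> \<Longrightarrow> reach \<tau> R n y \<Longrightarrow> thesis) \<Longrightarrow> thesis"
  by (subst (asm) reach.simps(2)) blast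

lemma reach_mono: "reach \<tau> R n x \<Longrightarrow> reach \<tau> R (Suc n) x"
proof (induction n arbitrary: x)
  case 0
  then show ?case by (simp add: reach_diagI)
next
  case (Suc n)
  show ?case
  proof (cases "x \<in> diag_pairs")
    case True then show ?thesis by (rule reach_diagI)
  next
    case False
    from reach_SucE[OF Suc.prems False] show ?thesis
      using Suc.IH reach_SucI by metis
  qed
qed

lemma reach_mono': "reach \<tau> R m x \<Longrightarrow> m \<le> n \<Longrightarrow> reach \<tau> R n x"
  by (induction n) (auto simp: le_Suc_eq intro: reach_mono)

lemma diag_in: "equiv UNIV R \<Longrightarrow> diag_pairs \<subseteq> R"
  by (auto simp: diag_pairs_def equiv_def refl_on_def)

lemma reach_R: "equiv UNIV R \<Longrightarrow> reach \<tau> R n x \<Longrightarrow> x \<in> R"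
  using diag_in[of R] by (cases n) (auto elim: reach_SucE)

lemma swap_coupling: "\<omega> \<in> couplings \<mu> \<nu> \<Longrightarrow> map_pmf prod.swap \<omega> \<in> couplings \<nu> \<mu>"
  by (auto simp: couplings_def pmf.map_comp o_def)

lemma diag_coupling: "map_pmf (\<lambda>y. (y,y)) \<mu> \<in> couplings \<mu> \<mu>"
  by (auto simp: couplings_def pmf.map_comp o_def)

lemma diag_coupling_set: "set_pmf (map_pmf (\<lambda>y. (y,y)) \<mu>) \<subseteq> diag_pairs"
  by (auto simp: diag_pairs_def)

lemma reach_sym: "sym R \<Longrightarrow> reach \<tau> R n (a,b) \<Longrightarrow> reach \<tau> R n (b,a)"
proof (induction n arbitrary: a b)
  case 0
  then show ?case by (auto simp: diag_pairs_def)
next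
  case (Suc n)
  show ?case
  proof (cases "(a,b) \<in> diag_pairs")
    case True
    then show ?thesis by (auto simp: diag_pairs_def intro: reach_diagI)
  next
    case False
    obtain \<omega> y where w: "\<omega> \<in> couplings (\<tau> a) (\<tau> b)" "set_pmf \<omega> \<subseteq> R"
      "y \<in> set_pmf \<omega>" "reach \<tau> R n y" and ab: "(a,b) \<in> R"
      using reach_SucE[OF Suc.prems(2) False] by (metis fst_conv snd_conv)
    have "reach \<tau> R n (prod.swap y)" using Suc.IH[of "fst y" "snd y"] Suc.prems(1) w(4)
      by (cases y) auto
    moreover have "set_pmf (map_pmf prod.swap \<omega>) \<subseteq> R" using w(2) Suc.prems(1)
      by (auto simp: sym_def)
    moreover have "(b,a) \<in> R" using ab Suc.prems(1) by (auto simp: sym_def)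
    ultimately show ?thesis using swap_coupling[OF w(1)] w(3)
      by (intro reach_SucI[of _ _ "map_pmf prod.swap \<omega>" _ "prod.swap y"]) auto
  qed
qed

lemma path_reach:
  assumes bis: "bisimulation \<tau> lab R" and P: "P \<in> policies \<tau> lab"
  shows "xs \<noteq> [] \<Longrightarrow> last xs \<in> diag_pairs \<Longrightarrow>
    (\<forall>i. Suc i < length xs \<longrightarrow> xs ! Suc i \<in> set_pmf (P (xs ! i))) \<Longrightarrow>
    (\<forall>x\<in>set xs. x \<in> R \<and> set_pmf (P x) \<subseteq> R) \<Longrightarrow> \<exists>n. reach \<tau> R n (hd xs)"
proof (induction xs)
  case Nil
  then show ?case by simp
next
  case (Cons x ys)
  show ?case
  proof (cases "ys = []")
    case True
    then show ?thesis using Cons.prems by (auto intro: exI[of _ 0] reach_diagI)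
  next
    case False
    have "\<forall>i. Suc i < length ys \<longrightarrow> ys ! Suc i \<in> set_pmf (P (ys ! i))"
    proof (intro allI impI)
      fix i assume "Suc i < length ys"
      then show "ys ! Suc i \<in> set_pmf (P (ys ! i))"
        using Cons.prems(3)[rule_format, of "Suc i"] by simp
    qed
    then obtain n where n: "reach \<tau> R n (hd ys)"
      using Cons.IH Cons.prems False by auto
    have hy: "hd ys \<in> set_pmf (P x)"
      using Cons.prems(3)[rule_format, of 0] False by (simp add: hd_conv_nth)
    have xR: "x \<in> R" "set_pmf (P x) \<subseteq> R" using Cons.prems(4) by auto
    then have "x \<notin> diff_label_pairs lab" using bis
      by (cases x) (auto simp: bisimulation_def diff_label_pairs_def)
    then have "P x \<in> couplings (\<tau> (fst x)) (\<tau> (snd x))" using P by (cases x) (auto simp: policies_def)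
    then have "reach \<tau> R (Suc n) x" using xR hy n by (intro reach_SucI) auto
    then show ?thesis by auto
  qed
qed

definition pstar :: "('s \<Rightarrow> 's pmf) \<Rightarrow> ('s \<Rightarrow> 'l) \<Rightarrow> ('s \<times> 's) set \<Rightarrow> 's \<times> 's \<Rightarrow> ('s \<times> 's) pmf" where
  "pstar \<tau> lab R u = (if u \<in> diff_label_pairs lab then return_pmf u
     else if u \<in> diag_pairs then map_pmf (\<lambda>y. (y,y)) (\<tau> (fst u))
     else if (\<exists>n. reach \<tau> R (Suc n) u) then
       (SOME \<omega>. \<omega> \<in> couplings (\<tau> (fst u)) (\<tau> (snd u)) \<and> set_pmf \<omega> \<subseteq> R \<and>
          (\<exists>y\<in>set_pmf \<omega>. reach \<tau> R (LEAST n. reach \<tau> R (Suc n) u) y))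
     else pair_pmf (\<tau> (fst u)) (\<tau> (snd u)))"

lemma pstar_some:
  assumes "u \<notin> diag_pairs" "reach \<tau> R (Suc n) u"
  defines "k \<equiv> LEAST n. reach \<tau> R (Suc n) u"
  shows "\<exists>\<omega>. \<omega> \<in> couplings (\<tau> (fst u)) (\<tau> (snd u)) \<and> set_pmf \<omega> \<subseteq> R \<and>
          (\<exists>y\<in>set_pmf \<omega>. reach \<tau> R k y)" "k \<le> n"
proof -
  have "reach \<tau> R (Suc k) u" unfolding k_def by (rule LeastI[of _ n]) fact
  then show "\<exists>\<omega>. \<omega> \<in> couplings (\<tau> (fst u)) (\<tau> (snd u)) \<and> set_pmf \<omega> \<subseteq> R \<and>
          (\<exists>y\<in>set_pmf \<omega>. reach \<tau> R k y)"
    using assms(1) by (elim reach_SucE) auto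
  show "k \<le> n" unfolding k_def by (rule Least_le) fact
qed

lemma pstar_policy: "pstar \<tau> lab R \<in> policies \<tau> lab"
proof -
  have "pstar \<tau> lab R u \<in> couplings (\<tau> (fst u)) (\<tau> (snd u))" if "u \<notin> diff_label_pairs lab" for u
  proof -
    consider "u \<in> diag_pairs" | "u \<notin> diag_pairs" "\<exists>n. reach \<tau> R (Suc n) u"
      | "u \<notin> diag_pairs" "\<not>(\<exists>n. reach \<tau> R (Suc n) u)" by blast
    then show ?thesis
    proof cases
      case 1
      then show ?thesis using that diag_coupling[of "\<tau> (fst u)"]
        by (auto simp: pstar_def diag_pairs_def)
    next
      case 2
      then obtain n where "reach \<tau> R (Suc n) u" by blast
      from someI_ex[OF pstar_some(1)[OF 2(1) this]] show ?thesis using 2 that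
        by (simp add: pstar_def)
    next
      case 3
      then show ?thesis using that
        by (simp add: pstar_def couplings_def map_fst_pair_pmf map_snd_pair_pmf)
    qed
  qed
  moreover have "pstar \<tau> lab R u = return_pmf u" if "u \<in> diff_label_pairs lab" for u
    using that by (simp add: pstar_def)
  ultimately show ?thesis unfolding policies_def by blast
qed

lemma reach_path:
  assumes eq: "equiv UNIV R" and bis: "\<forall>x\<in>R. x \<notin> diff_label_pairs lab"
  shows "reach \<tau> R n u \<Longrightarrow> supports_path_to_diag R (pstar \<tau> lab R) u"
proof (induction n arbitrary: u)
  case 0
  have "u \<in> R" using 0 diag_in[OF eq] by auto
  moreover have "set_pmf (pstar \<tau> lab R u) \<subseteq> R" using 0 diag_in[OF eq]
    diag_coupling_set[of "\<tau> (fst u)"]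
    by (auto simp: pstar_def diag_pairs_def diff_label_pairs_def)
  ultimately show ?case using 0 unfolding supports_path_to_diag_def
    by (intro exI[of _ "[u]"]) auto
next
  case (Suc n)
  show ?case
  proof (cases "u \<in> diag_pairs")
    case True
    have "u \<in> R" using True diag_in[OF eq] by auto
    moreover have "set_pmf (pstar \<tau> lab R u) \<subseteq> R" using True diag_in[OF eq]
      diag_coupling_set[of "\<tau> (fst u)"]
      by (auto simp: pstar_def diag_pairs_def diff_label_pairs_def)
    ultimately show ?thesis using True unfolding supports_path_to_diag_def
      by (intro exI[of _ "[u]"]) auto
  next
    case False
    define k where "k = (LEAST n. reach \<tau> R (Suc n) u)"
    have uR: "u \<in> R" using reach_R[OF eq Suc.prems] .
    have nd: "u \<notin> diff_label_pairs lab" using bis uR by auto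
    define \<omega> where "\<omega> = pstar \<tau> lab R u"
    have om: "\<omega> = (SOME \<omega>. \<omega> \<in> couplings (\<tau> (fst u)) (\<tau> (snd u)) \<and> set_pmf \<omega> \<subseteq> R \<and>
          (\<exists>y\<in>set_pmf \<omega>. reach \<tau> R k y))"
      using nd False Suc.prems unfolding \<omega>_def pstar_def k_def by auto
    have "\<omega> \<in> couplings (\<tau> (fst u)) (\<tau> (snd u)) \<and> set_pmf \<omega> \<subseteq> R \<and>
          (\<exists>y\<in>set_pmf \<omega>. reach \<tau> R k y)"
      unfolding om k_def by (rule someI_ex[OF pstar_some(1)[OF False Suc.prems]])
    then obtain y where y: "set_pmf \<omega> \<subseteq> R" "y \<in> set_pmf \<omega>" "reach \<tau> R k y" by blast
    have "k \<le> n" unfolding k_def by (rule pstar_some(2)[OF False Suc.prems])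
    then have "reach \<tau> R n y" using y(3) reach_mono' by blast
    from Suc.IH[OF this] obtain xs where xs: "xs \<noteq> []" "hd xs = y" "last xs \<in> diag_pairs"
      "\<forall>i. Suc i < length xs \<longrightarrow> xs ! Suc i \<in> set_pmf (pstar \<tau> lab R (xs ! i))"
      "\<forall>x\<in>set xs. x \<in> R \<and> set_pmf (pstar \<tau> lab R x) \<subseteq> R"
      unfolding supports_path_to_diag_def by blast
    have "\<forall>i. Suc i < length (u # xs) \<longrightarrow> (u # xs) ! Suc i \<in> set_pmf (pstar \<tau> lab R ((u # xs) ! i))"
    proof (intro allI impI)
      fix i assume i: "Suc i < length (u # xs)"
      show "(u # xs) ! Suc i \<in> set_pmf (pstar \<tau> lab R ((u # xs) ! i))"
      proof (cases i)
        case 0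
        then show ?thesis using xs(1,2) y(2) by (simp add: hd_conv_nth \<omega>_def)
      next
        case (Suc j)
        then show ?thesis using xs(4) i by simp
      qed
    qed
    then show ?thesis unfolding supports_path_to_diag_def using xs uR y(1)
      by (intro exI[of _ "u # xs"]) (auto simp: \<omega>_def)
  qed
qed

lemma Filter_eq:
  assumes bis: "bisimulation \<tau> lab R"
  shows "Filter \<tau> lab R = {u. \<exists>n. reach \<tau> R n u}"
proof -
  have eq: "equiv UNIV R" using bis by (simp add: bisimulation_def)
  have nd: "\<forall>x\<in>R. x \<notin> diff_label_pairs lab" using bis
    by (auto simp: bisimulation_def diff_label_pairs_def)
  show ?thesis
  proof
    show "Filter \<tau> lab R \<subseteq> {u. \<exists>n. reach \<tau> R n u}"
    proof
      fix u assume "u \<in> Filter \<tau> lab R"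
      then obtain P where P: "P \<in> policies \<tau> lab" and "supports_path_to_diag R P u"
        unfolding Filter_def by auto
      then obtain xs where xs: "xs \<noteq> []" "hd xs = u" "last xs \<in> diag_pairs"
        "\<forall>i. Suc i < length xs \<longrightarrow> xs ! Suc i \<in> set_pmf (P (xs ! i))"
        "\<forall>x\<in>set xs. x \<in> R \<and> set_pmf (P x) \<subseteq> R"
        unfolding supports_path_to_diag_def by blast
      from path_reach[OF bis P xs(1,3,4,5)] xs(2) show "u \<in> {u. \<exists>n. reach \<tau> R n u}" by simp
    qed
    show "{u. \<exists>n. reach \<tau> R n u} \<subseteq> Filter \<tau> lab R"
    proof
      fix u assume "u \<in> {u. \<exists>n. reach \<tau> R n u}"
      then obtain n where n: "reach \<tau> R n u" by blast
      have "u \<in> R" using reach_R[OF eq n] .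
      moreover have "supports_path_to_diag R (pstar \<tau> lab R) u" using reach_path[OF eq nd n] .
      ultimately show "u \<in> Filter \<tau> lab R" using pstar_policy[of \<tau> lab R]
        unfolding Filter_def by (cases u) blast
    qed
  qed
qed

lemma exp_sum: "measure_pmf.expectation p (g :: ('a::finite) \<Rightarrow> real) = (\<Sum>y\<in>UNIV. g y * pmf p y)"
  by (rule integral_measure_pmf_real) auto

lemma sum_pmf_univ: "(\<Sum>y\<in>(UNIV::'a::finite set). pmf p y) = 1"
  by (rule sum_pmf_eq_1) auto

lemma rw_bounds: "0 \<le> reach_within P n (x::('s::finite \<times> 's)) \<and> reach_within P n x \<le> 1"
proof (induction n arbitrary: x)
  case 0
  then show ?case by simp
next
  case (Suc n)
  have a: "0 \<le> (\<Sum>y\<in>UNIV. reach_within P n y * pmf (P x) y)"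
    using Suc.IH by (intro sum_nonneg mult_nonneg_nonneg) auto
  have "(\<Sum>y\<in>UNIV. reach_within P n y * pmf (P x) y) \<le> (\<Sum>y\<in>UNIV. 1 * pmf (P x) y)"
    using Suc.IH by (intro sum_mono mult_right_mono) auto
  then have b: "(\<Sum>y\<in>UNIV. reach_within P n y * pmf (P x) y) \<le> 1" using sum_pmf_univ[of "P x"] by simp
  show ?case using a b by (simp add: exp_sum)
qed

lemma rw_le_rp: "reach_within P n (x::('s::finite \<times> 's)) \<le> reach_prob P x"
  unfolding reach_prob_def
  by (rule cSUP_upper) (auto intro!: bdd_aboveI2[where M=1] simp: rw_bounds)

lemma rp_le1: "reach_prob P (x::('s::finite \<times> 's)) \<le> 1"
  unfolding reach_prob_def by (rule cSUP_least) (auto simp: rw_bounds)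

lemma rw_diff_zero:
  assumes P: "P \<in> policies \<tau> lab" and x: "x \<in> diff_label_pairs lab"
  shows "reach_within P n x = 0"
proof -
  have nd: "x \<notin> diag_pairs" using x by (auto simp: diff_label_pairs_def diag_pairs_def)
  have Px: "P x = return_pmf x" using P x by (cases x) (auto simp: policies_def)
  show ?thesis by (induction n) (auto simp: nd Px)
qed

lemma claimC1:
  assumes P: "P \<in> policies \<tau> lab" and r: "reach_prob P x = 1"
  shows "x \<notin> diff_label_pairs lab"
proof
  assume "x \<in> diff_label_pairs lab"
  then have "reach_prob P x = 0" using rw_diff_zero[OF P] by (simp add: reach_prob_def)
  with r show False by simp
qed

lemma claimC2:
  fixes x :: "'s::finite \<times> 's"
  assumes r: "reach_prob P x = 1" and nd: "x \<notin> diag_pairs" and y: "y \<in> set_pmf (P x)"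
  shows "reach_prob P y = 1"
proof (rule ccontr)
  assume ne: "reach_prob P y \<noteq> 1"
  define c where "c = reach_prob P y"
  have c1: "c < 1" using ne rp_le1[of P y] by (simp add: c_def)
  have c0: "0 \<le> c" using rw_le_rp[of P 0 y] rw_bounds[of P 0 y] by (simp add: c_def)
  define p where "p = pmf (P x) y"
  have p0: "0 < p" using y by (simp add: p_def pmf_positive)
  have p1: "p \<le> 1" by (simp add: p_def pmf_le_1)
  define d where "d = 1 - (1 - c) * p"
  have d1: "d < 1" using c1 p0 by (simp add: d_def)
  have d0: "0 \<le> d" using c0 c1 p0 p1 mult_le_one[of "1-c" p] by (simp add: d_def)
  have "reach_within P n x \<le> d" for n
  proof (cases n)
    case 0
    then show ?thesis using nd d0 by simp
  next
    case (Suc m)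
    let ?h = "\<lambda>z. if z = y then c else 1"
    have "(\<Sum>z\<in>UNIV. reach_within P m z * pmf (P x) z) \<le> (\<Sum>z\<in>UNIV. ?h z * pmf (P x) z)"
      using rw_bounds[of P m] rw_le_rp[of P m y] by (intro sum_mono mult_right_mono) (auto simp: c_def)
    also have "(\<Sum>z\<in>UNIV. ?h z * pmf (P x) z) =
       (\<Sum>z\<in>UNIV. pmf (P x) z - (if z = y then (1 - c) * pmf (P x) z else 0))"
      by (intro sum.cong) (auto simp: algebra_simps)
    also have "\<dots> = d"
      by (simp add: sum_subtractf sum_pmf_univ d_def p_def)
    finally show ?thesis using Suc nd by (simp add: exp_sum)
  qed
  then have "reach_prob P x \<le> d" unfolding reach_prob_def by (intro cSUP_least) auto
  with r d1 show False by simp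
qed

lemma claimB_pos:
  fixes x :: "'s::finite \<times> 's"
  assumes "reach_prob P x = 1" shows "\<exists>n. reach_within P n x > 0"
proof (rule ccontr)
  assume "\<not> ?thesis"
  then have "reach_prob P x \<le> 0" unfolding reach_prob_def by (intro cSUP_least) (auto simp: not_less)
  with assms show False by simp
qed

lemma claimB':
  fixes x :: "'s::finite \<times> 's"
  assumes P: "P \<in> policies \<tau> lab" and GR: "\<And>z. reach_prob P z = 1 \<Longrightarrow> z \<in> R"
  shows "reach_prob P x = 1 \<Longrightarrow> reach_within P n x > 0 \<Longrightarrow> reach \<tau> R n x"
proof (induction n arbitrary: x)
  case 0
  then show ?case by (simp split: if_splits)
next
  case (Suc n)
  show ?case
  proof (cases "x \<in> diag_pairs")
    case True then show ?thesis by (rule reach_diagI)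
  next
    case False
    have "0 < (\<Sum>z\<in>UNIV. reach_within P n z * pmf (P x) z)"
      using Suc.prems(2) False by (simp add: exp_sum)
    then obtain z where z: "0 < reach_within P n z * pmf (P x) z"
      by (metis (no_types, lifting) not_less sum_nonpos)
    have pz: "pmf (P x) z > 0"
      using z rw_bounds[of P n z] by (metis less_eq_real_def mult_not_zero pmf_nonneg)
    have fz: "reach_within P n z > 0"
      using z pz by (metis mult_nonpos_nonneg not_less pmf_nonneg)
    have zs: "z \<in> set_pmf (P x)" using pz by (simp add: set_pmf_iff)
    have supp: "set_pmf (P x) \<subseteq> R" using claimC2[OF Suc.prems(1) False] GR by blast
    have rz: "reach_prob P z = 1" using claimC2[OF Suc.prems(1) False zs] .
    have nd: "x \<notin> diff_label_pairs lab" using claimC1[OF P Suc.prems(1)] .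
    then have "P x \<in> couplings (\<tau> (fst x)) (\<tau> (snd x))" using P by (cases x) (auto simp: policies_def)
    then show ?thesis using GR[OF Suc.prems(1)] supp zs Suc.IH[OF rz fz]
      by (intro reach_SucI) auto
  qed
qed

lemma claimB:
  fixes x :: "'s::finite \<times> 's"
  assumes P: "P \<in> policies \<tau> lab" and GR: "\<And>z. reach_prob P z = 1 \<Longrightarrow> z \<in> R"
    and r: "reach_prob P x = 1"
  shows "\<exists>n. reach \<tau> R n x"
  using claimB_pos[OF r] claimB'[OF P GR r] by blast

lemma claimA:
  fixes s t u :: "'s::finite"
  assumes P: "P \<in> policies \<tau> lab" and GR: "\<And>z. reach_prob P z = 1 \<Longrightarrow> z \<in> R"
    and eq: "equiv UNIV R"
  shows "reach \<tau> R n (t,u) \<Longrightarrow> reach_prob P (s,t) = 1 \<Longrightarrow> \<exists>m. reach \<tau> R m (s,u)"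
proof (induction n arbitrary: s t u)
  case 0
  then have "t = u" by (simp add: diag_pairs_def)
  then show ?case using claimB[OF P GR 0(2)] by simp
next
  case (Suc n)
  have tr: "trans R" using eq by (simp add: equiv_def)
  show ?case
  proof (cases "(t,u) \<in> diag_pairs")
    case True
    then have "t = u" by (simp add: diag_pairs_def)
    then show ?thesis using claimB[OF P GR Suc.prems(2)] by simp
  next
    case ndtu: False
    show ?thesis
    proof (cases "s = t")
      case True
      then show ?thesis using Suc.prems(1) by blast
    next
      case False
      then have ndst: "(s,t) \<notin> diag_pairs" by (simp add: diag_pairs_def)
      obtain \<omega>2 y where w2: "(t,u) \<in> R" "\<omega>2 \<in> couplings (\<tau> t) (\<tau> u)" "set_pmf \<omega>2 \<subseteq> R"
        "y \<in> set_pmf \<omega>2" "reach \<tau> R n y"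
        using reach_SucE[OF Suc.prems(1) ndtu] by (metis fst_conv snd_conv)
      obtain t' u' where y: "y = (t',u')" by (cases y)
      define \<omega>1 where "\<omega>1 = P (s,t)"
      have "(s,t) \<notin> diff_label_pairs lab" using claimC1[OF P Suc.prems(2)] .
      then have w1: "\<omega>1 \<in> couplings (\<tau> s) (\<tau> t)" using P by (auto simp: policies_def \<omega>1_def)
      have s1: "\<And>z. z \<in> set_pmf \<omega>1 \<Longrightarrow> reach_prob P z = 1"
        using claimC2[OF Suc.prems(2) ndst] by (simp add: \<omega>1_def)
      have "\<tau> t = map_pmf fst \<omega>2" using w2(2) by (simp add: couplings_def)
      then have "t' \<in> set_pmf (\<tau> t)" using w2(4) y by (auto intro!: rev_image_eqI[of y])
      then have "t' \<in> set_pmf (map_pmf snd \<omega>1)" using w1 by (simp add: couplings_def)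
      then obtain s' where s': "(s',t') \<in> set_pmf \<omega>1" by auto
      obtain m where m: "reach \<tau> R m (s',u')"
        using Suc.IH[of t' u' s'] w2(5) y s1[OF s'] by auto
      obtain \<theta> where th: "\<theta> \<in> couplings (\<tau> s) (\<tau> u)" "set_pmf \<theta> \<subseteq> set_pmf \<omega>1 O set_pmf \<omega>2"
        "\<forall>a b c. (a,b)\<in>set_pmf \<omega>1 \<longrightarrow> (b,c)\<in>set_pmf \<omega>2 \<longrightarrow> (a,c)\<in>set_pmf \<theta>"
        using glue[OF w1 w2(2)] by blast
      have s'u': "(s',u') \<in> set_pmf \<theta>" using th(3) s' w2(4) y by blast
      have "set_pmf \<omega>1 \<subseteq> R" using s1 GR by blast
      then have thR: "set_pmf \<theta> \<subseteq> R" using th(2) w2(3) tr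
        by (meson relcomp_mono subset_trans trans_O_subset)
      have "(s,t) \<in> R" using GR Suc.prems(2) by blast
      then have "(s,u) \<in> R" using w2(1) tr by (meson transD)
      then have "reach \<tau> R (Suc m) (s,u)" using th(1) thR s'u' m
        by (intro reach_SucI[of _ _ \<theta> _ "(s',u')"]) auto
      then show ?thesis by blast
    qed
  qed
qed

definition swapP :: "('s \<times> 's \<Rightarrow> ('s \<times> 's) pmf) \<Rightarrow> 's \<times> 's \<Rightarrow> ('s \<times> 's) pmf" where
  "swapP P = (\<lambda>x. map_pmf prod.swap (P (prod.swap x)))"

lemma swapP_policy: "P \<in> policies \<tau> lab \<Longrightarrow> swapP P \<in> policies \<tau> lab"
  unfolding policies_def swapP_def
proof (safe)
  fix a b
  assume h: "\<forall>u. (u \<notin> diff_label_pairs lab \<longrightarrow> P u \<in> couplings (\<tau> (fst u)) (\<tau> (snd u))) \<and>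
          (u \<in> diff_label_pairs lab \<longrightarrow> P u = return_pmf u)"
  have sw: "((b,a) \<in> diff_label_pairs lab) = ((a,b) \<in> diff_label_pairs lab)"
    by (auto simp: diff_label_pairs_def)
  show "(a, b) \<notin> diff_label_pairs lab \<Longrightarrow>
       map_pmf prod.swap (P (prod.swap (a, b))) \<in> couplings (\<tau> (fst (a, b))) (\<tau> (snd (a, b)))"
    using h[rule_format, of "(b,a)"] sw swap_coupling by fastforce
  show "(a, b) \<in> diff_label_pairs lab \<Longrightarrow> map_pmf prod.swap (P (prod.swap (a, b))) = return_pmf (a, b)"
    using h[rule_format, of "(b,a)"] sw by simp
qed

lemma swapP_apply: "swapP P x = map_pmf prod.swap (P (prod.swap x))"
  by (simp add: swapP_def)

lemma swapP_rw: "reach_within (swapP P) n x = reach_within P n (prod.swap x)"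
proof (induction n arbitrary: x)
  case 0
  then show ?case by (cases x) (auto simp: diag_pairs_def)
next
  case (Suc n)
  have d: "(prod.swap x \<in> diag_pairs) = (x \<in> diag_pairs)" by (cases x) (auto simp: diag_pairs_def)
  have "measure_pmf.expectation (swapP P x) (reach_within (swapP P) n) =
        measure_pmf.expectation (P (prod.swap x)) (reach_within P n)"
    by (simp add: swapP_apply Suc.IH)
  then show ?case by (simp add: d)
qed

lemma swapP_rp: "reach_prob (swapP P) x = reach_prob P (prod.swap x)"
  by (simp add: reach_prob_def swapP_rw)

lemma Prune_trans: "trans (Prune Q)"
  unfolding Prune_def trans_def by blast

lemma Prune_sym: "sym Q \<Longrightarrow> sym (Prune Q)"
  unfolding Prune_def sym_def by blast

lemma Prune_diag: "diag_pairs \<subseteq> Q \<Longrightarrow> diag_pairs \<subseteq> Prune Q"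
  unfolding Prune_def diag_pairs_def by blast

lemma rtrancl_in: "E \<subseteq> X \<Longrightarrow> diag_pairs \<subseteq> X \<Longrightarrow> trans X \<Longrightarrow> E\<^sup>* \<subseteq> X"
proof
  fix x assume h: "E \<subseteq> X" "diag_pairs \<subseteq> X" "trans X" and x: "x \<in> E\<^sup>*"
  obtain a c where ac: "x = (a,c)" by (cases x)
  have "(a,c) \<in> E\<^sup>* \<Longrightarrow> (a,c) \<in> X"
  proof (induction rule: rtrancl_induct)
    case base
    then show ?case using h(2) by (auto simp: diag_pairs_def)
  next
    case (step y z)
    then show ?case using h(1,3) by (meson subsetD transD)
  qed
  then show "x \<in> X" using x ac by simp
qed

lemma rtrancl_bisim:
  assumes sE: "sym E"
    and hE: "\<forall>x\<in>E. lab (fst x) = lab (snd x) \<and>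
       (\<exists>\<omega>\<in>couplings (\<tau> (fst x)) (\<tau> (snd x)). set_pmf \<omega> \<subseteq> E\<^sup>*)"
  shows "bisimulation \<tau> lab (E\<^sup>*)"
proof -
  have eqv: "equiv UNIV (E\<^sup>*)"
    unfolding equiv_def by (simp add: refl_rtrancl sym_rtrancl[OF sE] trans_rtrancl)
  have "lab a = lab c \<and> (\<exists>\<omega>\<in>couplings (\<tau> a) (\<tau> c). set_pmf \<omega> \<subseteq> E\<^sup>*)" if "(a,c) \<in> E\<^sup>*" for a c
    using that
  proof (induction rule: rtrancl_induct)
    case base
    have "set_pmf (map_pmf (\<lambda>y. (y,y)) (\<tau> a)) \<subseteq> E\<^sup>*" by auto
    then show ?case using diag_coupling[of "\<tau> a"] by blast
  next
    case (step y z)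
    obtain \<omega>1 where w1: "\<omega>1 \<in> couplings (\<tau> a) (\<tau> y)" "set_pmf \<omega>1 \<subseteq> E\<^sup>*" using step.IH by blast
    obtain \<omega>2 where w2: "\<omega>2 \<in> couplings (\<tau> y) (\<tau> z)" "set_pmf \<omega>2 \<subseteq> E\<^sup>*" and l: "lab y = lab z"
      using hE step.hyps(2) by fastforce
    obtain \<theta> where th: "\<theta> \<in> couplings (\<tau> a) (\<tau> z)" "set_pmf \<theta> \<subseteq> set_pmf \<omega>1 O set_pmf \<omega>2"
      using glue[OF w1(1) w2(1)] by blast
    have ts: "set_pmf \<theta> \<subseteq> E\<^sup>*" using th(2) w1(2) w2(2) by fastforce
    have "lab a = lab z" using l step.IH by simp
    then show ?case using th(1) ts by blast
  qed
  then show ?thesis using eqv unfolding bisimulation_def by auto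
qed

lemma bisimD: "bisimulation \<tau> lab B \<Longrightarrow> (s,t) \<in> B \<Longrightarrow>
   lab s = lab t \<and> (\<exists>\<omega>\<in>couplings (\<tau> s) (\<tau> t). set_pmf \<omega> \<subseteq> B)"
  unfolding bisimulation_def by fast

lemma bisim_sym: "bisimulation \<tau> lab B \<Longrightarrow> (s,t) \<in> B \<Longrightarrow> (t,s) \<in> B"
  unfolding bisimulation_def equiv_def by (meson symD)

theorem proposition8:
  fixes \<tau> :: "'s::finite \<Rightarrow> 's pmf" and lab :: "'s \<Rightarrow> 'l::finite"
    and R :: "('s \<times> 's) set"
  assumes "card (range lab) \<ge> 2"
    and "bisimulation \<tau> lab R"
    and "robust_bisim \<tau> lab \<subseteq> R"
    and "R \<subseteq> bisimilarity \<tau> lab"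
  shows "bisimulation \<tau> lab (Refine \<tau> lab R) \<and>
         robust_bisim \<tau> lab \<subseteq> Refine \<tau> lab R \<and> Refine \<tau> lab R \<subseteq> bisimilarity \<tau> lab"
proof -
  note bis = assms(2)
  define W where "W = robust_bisim \<tau> lab"
  define F where "F = Filter \<tau> lab R"
  define X where "X = Prune F"
  have eqR: "equiv UNIV R" using bis by (simp add: bisimulation_def)
  have symR: "sym R" using eqR by (simp add: equiv_def)
  have WR: "W \<subseteq> R" using assms(3) by (simp add: W_def)
  have Fe: "F = {u. \<exists>n. reach \<tau> R n u}" unfolding F_def by (rule Filter_eq[OF bis])
  have GW: "z \<in> W" if "P \<in> policies \<tau> lab" "reach_prob P z = 1" for P z
    using that unfolding W_def robust_bisim_def by (cases z) blast
  have GR: "z \<in> R" if "P \<in> policies \<tau> lab" "reach_prob P z = 1" for P z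
    using GW[OF that] WR by blast
  have Wsym: "(t,s) \<in> W" if st: "(s,t) \<in> W" for s t
  proof -
    obtain P where P: "P \<in> policies \<tau> lab" "reach_prob P (s,t) = 1"
      using st unfolding W_def robust_bisim_def by blast
    then have "reach_prob (swapP P) (t,s) = 1" by (simp add: swapP_rp)
    then show ?thesis using swapP_policy[OF P(1)] unfolding W_def robust_bisim_def by blast
  qed
  have symW: "sym W" using Wsym by (auto simp: sym_def)
  have Fsym: "sym F" unfolding Fe sym_def using reach_sym[OF symR] by blast
  have diagF: "diag_pairs \<subseteq> F" unfolding Fe using reach_diagI[of _ \<tau> R 0] by blast
  have WX: "W \<subseteq> X"
  proof
    fix x assume "x \<in> W"
    then obtain s t where x: "x = (s,t)" and "(s,t) \<in> W" by (cases x) blast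
    then obtain P where P: "P \<in> policies \<tau> lab" "reach_prob P (s,t) = 1"
      unfolding W_def robust_bisim_def by blast
    have GRP: "\<And>z. reach_prob P z = 1 \<Longrightarrow> z \<in> R" using GR[OF P(1)] .
    have P': "swapP P \<in> policies \<tau> lab" "reach_prob (swapP P) (t,s) = 1"
      using swapP_policy[OF P(1)] P(2) by (auto simp: swapP_rp)
    have GRP': "\<And>z. reach_prob (swapP P) z = 1 \<Longrightarrow> z \<in> R" using GR[OF P'(1)] .
    have stF: "(s,t) \<in> F" unfolding Fe using claimB[OF P(1) GRP P(2)] by blast
    have c1: "(s,u) \<in> F" if "(t,u) \<in> F" for u
      using that claimA[OF P(1) GRP eqR _ P(2)] unfolding Fe by blast
    have c2: "(u,t) \<in> F" if us: "(u,s) \<in> F" for u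
    proof -
      obtain n where "reach \<tau> R n (u,s)" using us unfolding Fe by blast
      then have "reach \<tau> R n (s,u)" using reach_sym[OF symR] by blast
      then obtain m where "reach \<tau> R m (t,u)" using claimA[OF P'(1) GRP' eqR _ P'(2)] by blast
      then have "reach \<tau> R m (u,t)" using reach_sym[OF symR] by blast
      then show ?thesis unfolding Fe by blast
    qed
    show "x \<in> X" unfolding X_def Prune_def x using stF c1 c2 by blast
  qed
  have symX: "sym X" unfolding X_def by (rule Prune_sym[OF Fsym])
  have transX: "trans X" unfolding X_def by (rule Prune_trans)
  have diagX: "diag_pairs \<subseteq> X" unfolding X_def by (rule Prune_diag[OF diagF])
  have WsX: "W\<^sup>* \<subseteq> X" by (rule rtrancl_in[OF WX diagX transX])
  have Wbis: "bisimulation \<tau> lab (W\<^sup>*)"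
  proof (rule rtrancl_bisim[OF symW], intro ballI)
    fix x assume "x \<in> W"
    then obtain P where P: "P \<in> policies \<tau> lab" "reach_prob P x = 1"
      unfolding W_def robust_bisim_def by (cases x) blast
    show "lab (fst x) = lab (snd x) \<and>
       (\<exists>\<omega>\<in>couplings (\<tau> (fst x)) (\<tau> (snd x)). set_pmf \<omega> \<subseteq> W\<^sup>*)"
    proof (cases "x \<in> diag_pairs")
      case True
      then have "snd x = fst x" by (auto simp: diag_pairs_def)
      moreover have "set_pmf (map_pmf (\<lambda>y. (y,y)) (\<tau> (fst x))) \<subseteq> W\<^sup>*" by auto
      ultimately show ?thesis using diag_coupling[of "\<tau> (fst x)"] by metis
    next
      case False
      have nd: "x \<notin> diff_label_pairs lab" using claimC1[OF P] .
      then have c: "P x \<in> couplings (\<tau> (fst x)) (\<tau> (snd x))" using P(1)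
        by (cases x) (auto simp: policies_def)
      have "set_pmf (P x) \<subseteq> W" using claimC2[OF P(2) False] GW[OF P(1)] by blast
      then have "set_pmf (P x) \<subseteq> W\<^sup>*" by auto
      moreover have "lab (fst x) = lab (snd x)" using nd by (cases x) (auto simp: diff_label_pairs_def)
      ultimately show ?thesis using c by blast
    qed
  qed
  have RefX: "Refine \<tau> lab R = \<Union>{B. bisimulation \<tau> lab B \<and> B \<subseteq> X}"
    unfolding Refine_def Bisim_def X_def F_def ..
  have part2: "W \<subseteq> Refine \<tau> lab R"
    unfolding RefX using Wbis WsX r_into_rtrancl by blast
  have part3: "Refine \<tau> lab R \<subseteq> bisimilarity \<tau> lab"
    unfolding RefX bisimilarity_def by blast
  have part1: "bisimulation \<tau> lab (Refine \<tau> lab R)"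
  proof -
    let ?U = "Refine \<tau> lab R"
    have WU: "W\<^sup>* \<subseteq> ?U" unfolding RefX using Wbis WsX by blast
    have rU: "(a,a) \<in> ?U" for a by (rule subsetD[OF WU]) simp
    have sU: "(b,a) \<in> ?U" if ab: "(a,b) \<in> ?U" for a b
    proof -
      obtain B where B: "bisimulation \<tau> lab B" "B \<subseteq> X" "(a,b) \<in> B" using ab unfolding RefX by blast
      then have "(b,a) \<in> B" using bisim_sym by metis
      then show ?thesis using B unfolding RefX by blast
    qed
    have tU: "(a,c) \<in> ?U" if abc: "(a,b) \<in> ?U" "(b,c) \<in> ?U" for a b c
    proof -
      obtain B1 where B1: "bisimulation \<tau> lab B1" "B1 \<subseteq> X" "(a,b) \<in> B1"
        using abc(1) unfolding RefX by blast
      obtain B2 where B2: "bisimulation \<tau> lab B2" "B2 \<subseteq> X" "(b,c) \<in> B2"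
        using abc(2) unfolding RefX by blast
      let ?E = "B1 \<union> B2"
      have sE: "sym ?E" using bisim_sym[OF B1(1)] bisim_sym[OF B2(1)] unfolding sym_def by blast
      have hE: "\<forall>x\<in>?E. lab (fst x) = lab (snd x) \<and>
       (\<exists>\<omega>\<in>couplings (\<tau> (fst x)) (\<tau> (snd x)). set_pmf \<omega> \<subseteq> ?E\<^sup>*)"
      proof
        fix x assume "x \<in> ?E"
        then consider "x \<in> B1" | "x \<in> B2" by blast
        then show "lab (fst x) = lab (snd x) \<and>
           (\<exists>\<omega>\<in>couplings (\<tau> (fst x)) (\<tau> (snd x)). set_pmf \<omega> \<subseteq> ?E\<^sup>*)"
        proof cases
          case 1
          then obtain \<omega> where "lab (fst x) = lab (snd x)" "\<omega> \<in> couplings (\<tau> (fst x)) (\<tau> (snd x))"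
            "set_pmf \<omega> \<subseteq> B1" using bisimD[OF B1(1), of "fst x" "snd x"] by auto
          moreover have "B1 \<subseteq> ?E\<^sup>*" by auto
          ultimately show ?thesis by blast
        next
          case 2
          then obtain \<omega> where "lab (fst x) = lab (snd x)" "\<omega> \<in> couplings (\<tau> (fst x)) (\<tau> (snd x))"
            "set_pmf \<omega> \<subseteq> B2" using bisimD[OF B2(1), of "fst x" "snd x"] by auto
          moreover have "B2 \<subseteq> ?E\<^sup>*" by auto
          ultimately show ?thesis by blast
        qed
      qed
      have Eb: "bisimulation \<tau> lab (?E\<^sup>*)" by (rule rtrancl_bisim[OF sE hE])
      have EX: "?E\<^sup>* \<subseteq> X" using B1(2) B2(2) by (intro rtrancl_in[OF _ diagX transX]) blast
      have "(a,c) \<in> ?E\<^sup>*" using B1(3) B2(3)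
        by (meson UnI1 UnI2 r_into_rtrancl rtrancl_trans)
      then show ?thesis using Eb EX unfolding RefX by blast
    qed
    have eqv: "equiv UNIV ?U"
      by (intro equivI refl_onI symI transI) (auto intro: rU sU tU)
    have pairs: "lab s = lab t \<and> (\<exists>\<omega>\<in>couplings (\<tau> s) (\<tau> t). set_pmf \<omega> \<subseteq> ?U)"
      if st: "(s,t) \<in> ?U" for s t
    proof -
      obtain B where B: "bisimulation \<tau> lab B" "B \<subseteq> X" "(s,t) \<in> B" using st unfolding RefX by blast
      then obtain \<omega> where "lab s = lab t" "\<omega> \<in> couplings (\<tau> s) (\<tau> t)" "set_pmf \<omega> \<subseteq> B"
        using bisimD[OF B(1,3)] by blast
      moreover have "B \<subseteq> ?U" using B unfolding RefX by blast
      ultimately show ?thesis by blast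
    qed
    show ?thesis unfolding bisimulation_def
    proof (intro conjI eqv ballI)
      fix x assume "x \<in> ?U"
      then show "case x of (s,t) \<Rightarrow> lab s = lab t \<and> (\<exists>\<omega>\<in>couplings (\<tau> s) (\<tau> t). set_pmf \<omega> \<subseteq> ?U)"
        using pairs by (cases x) simp
    qed
  qed
  show ?thesis using part1 part2 part3 by (simp add: W_def)
qed

end
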